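(* Let $\alpha>0$, $n\in\mathbb N$, $0<a<b$ and let $x:[a,b]\to\mathbb R$ be a function of class $C^{n+1}$. Then, for $t\in[a,b)$, \[ {_t\mathcal{I}_b^\alpha} x(t)=\sum_{i=0}^{n}A_i(\alpha)\left(\ln\frac{b}{t}\right)^{\alpha+i} x_{i,0}(t)+\sum_{p=n+1}^\infty B(\alpha,p)\left(\ln\frac{b}{t}\right)^{\alpha+n-p}W_p(t), \] with \[ A_i(\alpha)=\frac{(-1)^i}{\Gamma(\alpha+i+1)}\left[1+\sum_{p=n-i+1}^\infty\frac{\Gamma(p-\alpha-n)}{\Gamma(-\alpha-i)(p-n+i)!}\right],\qquad B(\alpha,p)=\frac{\Gamma(p-\alpha-n)}{\Gamma(\alpha)\Gamma(1-\alpha)(p-n)!}, \] \[ W_p(t)=\int_t^b (p-n)\left(\ln\frac{b}{\tau}\right)^{p-n-1}\frac{x(\tau)}{\tau}\,d\tau. \]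
   Context: For $0<a<b$ and $\alpha>0$ the right Hadamard fractional integral is ${_t\mathcal{I}_b^\alpha} x(t)=\frac{1}{\Gamma(\alpha)}\int_t^b \left(\ln\frac{\tau}{t}\right)^{\alpha-1}\frac{x(\tau)}{\tau}\,d\tau$. The functions $x_{k,0}$ are defined recursively by $x_{0,0}(t)=x(t)$ and $x_{k+1,0}(t)=t\frac{d}{dt}x_{k,0}(t)$ for $k\ge 0$. $\Gamma$ is Euler's gamma function. *)

theory Defs
  imports "HOL-Analysis.Analysis"
begin

definition hadamard_right :: "real \<Rightarrow> real \<Rightarrow> (real \<Rightarrow> real) \<Rightarrow> real \<Rightarrow> real" where
  "hadamard_right \<alpha> b x t =
     (1 / Gamma \<alpha>) * integral {t..b} (\<lambda>\<tau>. (ln (\<tau> / t)) powr (\<alpha> - 1) * x \<tau> / \<tau>)"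

definition C_k_on :: "nat \<Rightarrow> real \<Rightarrow> real \<Rightarrow> (real \<Rightarrow> real) \<Rightarrow> bool" where
  "C_k_on m a b x \<longleftrightarrow>
     (\<exists>D :: nat \<Rightarrow> real \<Rightarrow> real.
        (\<forall>t\<in>{a..b}. D 0 t = x t) \<and>
        (\<forall>k<m. \<forall>t\<in>{a..b}. (D k has_real_derivative D (Suc k) t) (at t within {a..b})) \<and>
        (\<forall>k\<le>m. continuous_on {a..b} (D k)))"

fun xk0 :: "real \<Rightarrow> real \<Rightarrow> (real \<Rightarrow> real) \<Rightarrow> nat \<Rightarrow> real \<Rightarrow> real" where
  "xk0 a b x 0 = x"
| "xk0 a b x (Suc k) = (\<lambda>t. t * vector_derivative (xk0 a b x k) (at t within {a..b}))"

text \<open>A_i(alpha); the inner sum over p = n-i+1, n-i+2, ... is written with p = j + n - i + 1.\<close>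
definition A_coef :: "nat \<Rightarrow> real \<Rightarrow> nat \<Rightarrow> real" where
  "A_coef n \<alpha> i = ((-1) ^ i / Gamma (\<alpha> + real i + 1)) *
     (1 + (\<Sum>j. Gamma (real j + 1 - real i - \<alpha>) / (Gamma (- \<alpha> - real i) * fact (j + 1))))"

definition B_coef :: "nat \<Rightarrow> real \<Rightarrow> nat \<Rightarrow> real" where
  "B_coef n \<alpha> p = Gamma (real p - \<alpha> - real n) / (Gamma \<alpha> * Gamma (1 - \<alpha>) * fact (p - n))"

definition W_fun :: "nat \<Rightarrow> real \<Rightarrow> (real \<Rightarrow> real) \<Rightarrow> nat \<Rightarrow> real \<Rightarrow> real" where
  "W_fun n b x p t = integral {t..b}
     (\<lambda>\<tau>. real (p - n) * (ln (b / \<tau>)) ^ (p - n - 1) * x \<tau> / \<tau>)"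

end

theory Submission imports Defs begin

lemma powr_over_lin: fixes z :: real assumes "z < 1"
  shows "(\<lambda>N. real N powr z / (z + real N)) \<longlonglongrightarrow> 0"
proof -
  have a: "(\<lambda>N. real N powr (z - 1)) \<longlonglongrightarrow> 0"
    using assms by (intro tendsto_neg_powr filterlim_real_sequentially) auto
  have b: "(\<lambda>N. 1 / (1 + z * inverse (real N))) \<longlonglongrightarrow> 1 / (1 + z * 0)"
    by (intro tendsto_intros lim_inverse_n) auto
  have "(\<lambda>N. real N powr (z - 1) * (1 / (1 + z * inverse (real N)))) \<longlonglongrightarrow> 0 * (1 / (1 + z * 0))"
    by (intro tendsto_mult a b)
  moreover have "eventually (\<lambda>N. real N powr (z - 1) * (1 / (1 + z * inverse (real N))) = real N powr z / (z + real N)) sequentially"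
    using eventually_gt_at_top[of "0::nat"]
  proof eventually_elim
    case (elim N)
    then have "real N > 0" by simp
    then have N: "real N > 0" by simp
    have "1 / (1 + z * inverse (real N)) = real N / (z + real N)"
      using N by (simp add: field_simps)
    moreover have "real N powr (z - 1) = real N powr z / real N" using N by (simp add: powr_diff)
    ultimately show ?case using N by simp
  qed
  ultimately show ?thesis by (simp add: Lim_transform_eventually)
qed

lemma poch_lim:
  fixes z :: real assumes z: "z \<notin> \<int>" "z < 1"
  shows "(\<lambda>N. pochhammer z N / fact N) \<longlonglongrightarrow> 0"
proof -
  have ev: "eventually (\<lambda>N. rGamma_series z N * (real N powr z / (z + real N)) = pochhammer z N / fact N) sequentially"
    using eventually_gt_at_top[of "0::nat"]
  proof eventually_elim
    case (elim N)
    have nz: "z + real N \<noteq> 0"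
    proof
      assume "z + real N = 0" hence "z = - real N" by simp
      thus False using z(1) by simp
    qed
    define E where "E = exp (z * ln (real N))"
    have E: "E > 0" unfolding E_def by simp
    have pw: "real N powr z = E" unfolding E_def powr_def using elim by simp
    have f: "fact N > (0::real)" by simp
    have rg: "rGamma_series z N = pochhammer z N * (z + real N) / (fact N * E)"
      unfolding rGamma_series_def E_def by (simp add: pochhammer_Suc)
    show ?case unfolding rg pw using nz E f by (simp add: divide_simps)
  qed
  have "(\<lambda>N. real N powr z / (z + real N)) \<longlonglongrightarrow> 0" using z(2) by (rule powr_over_lin)
  hence "(\<lambda>N. rGamma_series z N * (real N powr z / (z + real N))) \<longlonglongrightarrow> rGamma z * 0"
    by (intro tendsto_mult rGamma_series_LIMSEQ)
  thus ?thesis using ev by (simp add: Lim_transform_eventually)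
qed

lemma A_series:
  fixes \<gamma> :: real assumes g: "\<gamma> > 0" "\<gamma> \<notin> \<int>"
  shows "(\<lambda>j. Gamma (real j + 1 - \<gamma>) / (Gamma (-\<gamma>) * fact (j+1))) sums (-1)"
proof -
  have ng: "- \<gamma> \<notin> \<int>\<^sub>\<le>\<^sub>0" using g(2) nonpos_Ints_Int minus_in_Ints_iff by blast
  have t: "Gamma (real j + 1 - \<gamma>) / (Gamma (-\<gamma>) * fact (j+1)) = pochhammer (-\<gamma>) (j+1) / fact (j+1)" for j
    using pochhammer_Gamma[OF ng, of "j+1"] by (simp add: field_simps)
  have ps: "(\<Sum>j<N. pochhammer (-\<gamma>) (j+1) / fact (j+1)) = pochhammer (1-\<gamma>) N / fact N - 1" for N
  proof (induction N)
    case 0 then show ?case by simp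
  next
    case (Suc N)
    have "pochhammer (-\<gamma>) (N+1) = (-\<gamma>) * pochhammer (1-\<gamma>) N"
      by (simp add: pochhammer_rec)
    moreover have "pochhammer (1-\<gamma>) (Suc N) = pochhammer (1-\<gamma>) N * (1 - \<gamma> + N)"
      by (simp add: pochhammer_Suc)
    ultimately have e: "(\<Sum>j<Suc N. pochhammer (-\<gamma>) (j+1) / fact (j+1)) =
       pochhammer (1-\<gamma>) N / fact N - 1 + (-\<gamma>) * pochhammer (1-\<gamma>) N / ((real N + 1) * fact N)"
       and e2: "pochhammer (1-\<gamma>) (Suc N) / fact (Suc N) = pochhammer (1-\<gamma>) N * (1 - \<gamma> + N) / ((real N + 1) * fact N)"
      using Suc by (simp_all add: algebra_simps)
    have fp: "fact N > (0::real)" "(real N + 1) * fact N > 0" by simp_all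
    show ?case unfolding e e2 using fp by (simp add: divide_simps) (simp add: algebra_simps)
  qed
  have z: "1 - \<gamma> \<notin> \<int>"
  proof
    assume "1 - \<gamma> \<in> \<int>" hence "1 - (1 - \<gamma>) \<in> \<int>" by (intro Ints_diff) auto
    thus False using g(2) by simp
  qed
  have "(\<lambda>N. pochhammer (1-\<gamma>) N / fact N - 1) \<longlonglongrightarrow> 0 - 1"
    by (intro tendsto_diff poch_lim z) (use g in auto)
  thus ?thesis unfolding sums_def t ps by simp
qed

lemma A_zero: assumes "\<alpha> > 0" "\<alpha> \<notin> \<int>" shows "A_coef n \<alpha> i = 0"
proof -
  have g: "\<alpha> + real i \<notin> \<int>"
  proof
    assume "\<alpha> + real i \<in> \<int>" hence "\<alpha> + real i - real i \<in> \<int>" by (intro Ints_diff) auto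
    thus False using assms(2) by simp
  qed
  have "(\<lambda>j. Gamma (real j + 1 - (\<alpha> + real i)) / (Gamma (-(\<alpha> + real i)) * fact (j+1))) sums (-1)"
    by (rule A_series) (use assms g in auto)
  hence "(\<Sum>j. Gamma (real j + 1 - real i - \<alpha>) / (Gamma (- \<alpha> - real i) * fact (j + 1))) = -1"
    by (simp add: sums_iff algebra_simps)
  thus ?thesis unfolding A_coef_def by simp
qed


definition cc :: "real \<Rightarrow> nat \<Rightarrow> real" where "cc \<alpha> k = pochhammer (1 - \<alpha>) k / fact k"

lemma cc_sums: assumes "0 \<le> s" "s < 1"
  shows "(\<lambda>k. cc \<alpha> k * s ^ k) sums (1 - s) powr (\<alpha> - 1)"
proof -
  have "(\<lambda>k. ((\<alpha> - 1) gchoose k) * (-s) ^ k) sums (1 + (-s)) powr (\<alpha> - 1)"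
    by (rule gen_binomial_real) (use assms in auto)
  moreover have "((\<alpha> - 1) gchoose k) * (-s) ^ k = cc \<alpha> k * s ^ k" for k
  proof -
    have m1: "((-1::real)^k) * (-1)^k = 1" by (simp flip: power_mult_distrib)
    have e: "-(\<alpha> - 1) = 1 - \<alpha>" by simp
    show ?thesis unfolding gbinomial_pochhammer e power_minus[of s] cc_def
      using m1 by (simp only: mult_ac times_divide_eq_left times_divide_eq_right mult_1_left) (simp add: mult.assoc[symmetric] m1)
  qed
  ultimately show ?thesis by simp
qed

lemma cc_sign: "\<exists>m. (\<forall>k\<ge>m. cc \<alpha> k \<ge> 0) \<or> (\<forall>k\<ge>m. cc \<alpha> k \<le> 0)"
proof -
  define m where "m = nat \<lceil>\<alpha>\<rceil>"
  have stp: "cc \<alpha> (Suc k) = cc \<alpha> k * ((1 - \<alpha> + real k) / (real k + 1))" for k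
    unfolding cc_def by (simp add: pochhammer_Suc field_simps)
  have pos: "k \<ge> m \<Longrightarrow> (1 - \<alpha> + real k) / (real k + 1) > 0" for k
    unfolding m_def by (intro divide_pos_pos) (linarith, simp)
  have A: "cc \<alpha> k \<ge> 0" if "cc \<alpha> m \<ge> 0" "k \<ge> m" for k
    using that(2)
  proof (induction k rule: dec_induct)
    case base then show ?case using that(1) .
  next
    case (step k)
    have "cc \<alpha> (Suc k) = cc \<alpha> k * ((1 - \<alpha> + real k) / (real k + 1))" by (rule stp)
    then show ?case using pos[of k] step(1,3) by (simp only:) (intro mult_nonneg_nonneg, auto)
  qed
  have B: "cc \<alpha> k \<le> 0" if "cc \<alpha> m \<le> 0" "k \<ge> m" for k
    using that(2)
  proof (induction k rule: dec_induct)
    case base then show ?case using that(1) .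
  next
    case (step k)
    have "cc \<alpha> (Suc k) = cc \<alpha> k * ((1 - \<alpha> + real k) / (real k + 1))" by (rule stp)
    then show ?case using pos[of k] step(1,3) by (simp only:) (intro mult_nonpos_nonneg, auto)
  qed
  show ?thesis
    by (cases "cc \<alpha> m \<ge> 0") (use A B in \<open>auto intro!: exI[of _ m]\<close>)
qed

lemma partial_bound_nonneg:
  fixes f :: "nat \<Rightarrow> real"
  assumes "f sums S" "\<forall>k\<ge>m. f k \<ge> 0"
  shows "\<bar>sum f {..<N}\<bar> \<le> \<bar>S\<bar> + 2 * (\<Sum>k<m. \<bar>f k\<bar>)"
proof (cases "N \<le> m")
  case True
  have "\<bar>sum f {..<N}\<bar> \<le> (\<Sum>k<N. \<bar>f k\<bar>)" by (rule sum_abs)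
  also have "\<dots> \<le> (\<Sum>k<m. \<bar>f k\<bar>)" by (rule sum_mono2) (use True in auto)
  finally show ?thesis by simp
next
  case False
  have sh: "(\<lambda>k. f (k + m)) sums (S - sum f {..<m})"
    using assms(1) by (rule sums_split_initial_segment)
  have split: "sum f {..<N} = sum f {..<m} + (\<Sum>k<N-m. f (k + m))"
  proof -
    have "sum f {..<N} = sum f {0..<N}" by (simp add: atLeast0LessThan)
    also have "\<dots> = sum f {0..<m} + sum f {m..<N}" using False by (simp add: sum.atLeastLessThan_concat)
    also have "sum f {0..<m} = sum f {..<m}" by (simp add: atLeast0LessThan)
    finally have "sum f {..<N} = sum f {..<m} + sum f {m..<N}" .
    also have "sum f {m..<N} = sum f {0 + m..<(N - m) + m}" using False by simp
    also have "\<dots> = (\<Sum>k=0..<N-m. f (k + m))" by (rule sum.shift_bounds_nat_ivl)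
    also have "\<dots> = (\<Sum>k<N-m. f (k + m))" by (simp add: atLeast0LessThan)
    finally show ?thesis .
  qed
  have t1: "(\<Sum>k<N-m. f (k + m)) \<le> S - sum f {..<m}"
    using sum_le_suminf[OF sums_summable[OF sh], of "{..<N-m}"] assms(2) sums_unique[OF sh]
    by auto
  have t0: "(\<Sum>k<N-m. f (k + m)) \<ge> 0" using assms(2) by (intro sum_nonneg) auto
  have "\<bar>sum f {..<m}\<bar> \<le> (\<Sum>k<m. \<bar>f k\<bar>)" by (rule sum_abs)
  then show ?thesis using split t1 t0 by linarith
qed

lemma partial_bound:
  fixes f :: "nat \<Rightarrow> real"
  assumes "f sums S" "(\<forall>k\<ge>m. f k \<ge> 0) \<or> (\<forall>k\<ge>m. f k \<le> 0)"
  shows "\<bar>sum f {..<N}\<bar> \<le> \<bar>S\<bar> + 2 * (\<Sum>k<m. \<bar>f k\<bar>)"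
  using assms(2)
proof
  assume "\<forall>k\<ge>m. f k \<ge> 0" then show ?thesis using partial_bound_nonneg assms(1) by blast
next
  assume "\<forall>k\<ge>m. f k \<le> 0"
  hence "\<forall>k\<ge>m. (- f k) \<ge> 0" by auto
  moreover have "(\<lambda>k. - f k) sums (- S)" using assms(1) by (rule sums_minus)
  ultimately have "\<bar>sum (\<lambda>k. - f k) {..<N}\<bar> \<le> \<bar>-S\<bar> + 2 * (\<Sum>k<m. \<bar>- f k\<bar>)"
    using partial_bound_nonneg by blast
  then show ?thesis by (simp add: sum_negf)
qed

lemma cc_bound:
  obtains C where "C \<ge> 0" "\<And>s N. 0 \<le> s \<Longrightarrow> s < 1 \<Longrightarrow>
     \<bar>\<Sum>k<N. cc \<alpha> k * s ^ k\<bar> \<le> (1 - s) powr (\<alpha> - 1) + C"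
proof -
  obtain m where m: "(\<forall>k\<ge>m. cc \<alpha> k \<ge> 0) \<or> (\<forall>k\<ge>m. cc \<alpha> k \<le> 0)" using cc_sign by blast
  define C where "C = 2 * (\<Sum>k<m. \<bar>cc \<alpha> k\<bar>)"
  show ?thesis
  proof (rule that)
    show "C \<ge> 0" unfolding C_def by (simp add: sum_nonneg)
  next
    fix s :: real and N assume s: "0 \<le> s" "s < 1"
    have sg: "(\<forall>k\<ge>m. cc \<alpha> k * s^k \<ge> 0) \<or> (\<forall>k\<ge>m. cc \<alpha> k * s^k \<le> 0)"
      using m s by (auto simp: mult_nonpos_nonneg)
    have "\<bar>\<Sum>k<N. cc \<alpha> k * s ^ k\<bar> \<le> \<bar>(1 - s) powr (\<alpha> - 1)\<bar> + 2 * (\<Sum>k<m. \<bar>cc \<alpha> k * s ^ k\<bar>)"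
      by (rule partial_bound[OF cc_sums[OF s] sg])
    also have "(\<Sum>k<m. \<bar>cc \<alpha> k * s ^ k\<bar>) \<le> (\<Sum>k<m. \<bar>cc \<alpha> k\<bar>)"
    proof (rule sum_mono)
      fix k assume "k \<in> {..<m}"
      have "\<bar>s ^ k\<bar> \<le> 1" using s by (simp add: power_le_one)
      then show "\<bar>cc \<alpha> k * s ^ k\<bar> \<le> \<bar>cc \<alpha> k\<bar>"
        by (simp add: abs_mult mult_left_le)
    qed
    finally show "\<bar>\<Sum>k<N. cc \<alpha> k * s ^ k\<bar> \<le> (1 - s) powr (\<alpha> - 1) + C"
      unfolding C_def by simp
  qed
qed



lemma Icc_Ioc_integral: "t \<le> b \<Longrightarrow> integral {t..b} f = integral {t<..b} (f::real\<Rightarrow>real)"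
  by (rule integral_spike_set; rule negligible_subset[of "{t}"]) auto

lemma Icc_Ioc_integrable: "t \<le> b \<Longrightarrow> f integrable_on {t..b} \<longleftrightarrow> f integrable_on {t<..b}"
  for f :: "real \<Rightarrow> real"
proof -
  assume "t \<le> b" then have "{t..b} = insert t {t<..b}" by auto
  then show ?thesis by (simp add: integrable_on_insert_iff)
qed

lemma kernel_integrable:
  fixes t b \<alpha> :: real
  assumes "0 < t" "t \<le> b" "\<alpha> > 0"
  shows "(\<lambda>\<tau>. ln (\<tau> / t) powr (\<alpha> - 1) / \<tau>) integrable_on {t..b}"
proof -
  define P where "P = (\<lambda>\<tau>::real. ln (\<tau> / t) powr \<alpha> / \<alpha>)"
  have "((\<lambda>\<tau>. ln (\<tau> / t) powr (\<alpha> - 1) / \<tau>) has_integral (P b - P t)) {t..b}"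
  proof (rule fundamental_theorem_of_calculus_interior[where f=P])
    show "continuous_on {t..b} P"
      unfolding P_def using assms by (intro continuous_intros continuous_on_powr') (auto intro!: continuous_intros)
  next
    fix \<tau> assume \<tau>: "\<tau> \<in> {t<..<b}"
    have l: "ln (\<tau> / t) > 0" using \<tau> assms by auto
    have "((\<lambda>\<tau>. ln (\<tau> / t) powr \<alpha> / \<alpha>) has_real_derivative
           (\<alpha> * ln (\<tau> / t) powr (\<alpha> - 1) * (1 / \<tau>) / \<alpha>)) (at \<tau>)"
      using \<tau> assms l
      by (auto intro!: derivative_eq_intros simp: field_simps)
    then show "(P has_vector_derivative
           ln (\<tau> / t) powr (\<alpha> - 1) / \<tau>) (at \<tau>)"
      unfolding P_def using assms by (simp add: has_real_derivative_iff_has_vector_derivative[symmetric])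
  qed (use assms in auto)
  then show ?thesis by blast
qed



lemma term_eq:
  assumes al: "\<alpha> \<notin> \<int>" and L: "L > 0"
  shows "B_coef n \<alpha> (k + n + 1) * L powr (\<alpha> + real n - real (k + n + 1)) * ((real k + 1) * I)
       = (L powr (\<alpha> - 1) * cc \<alpha> k / L ^ k) * I / Gamma \<alpha>"
proof -
  have z: "1 - \<alpha> \<notin> \<int>\<^sub>\<le>\<^sub>0"
  proof
    assume "1 - \<alpha> \<in> \<int>\<^sub>\<le>\<^sub>0" hence "1 - \<alpha> \<in> \<int>" by (rule nonpos_Ints_Int)
    hence "1 - (1 - \<alpha>) \<in> \<int>" by (intro Ints_diff) auto
    thus False using al by simp
  qed
  have g1: "Gamma (1 - \<alpha>) \<noteq> 0" using z by (simp add: Gamma_eq_zero_iff)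
  have cc: "cc \<alpha> k = Gamma (1 - \<alpha> + real k) / Gamma (1 - \<alpha>) / fact k"
    unfolding cc_def using pochhammer_Gamma[OF z, of k] by simp
  have p: "L powr (\<alpha> + real n - real (k + n + 1)) = L powr (\<alpha> - 1) / L ^ k"
  proof -
    have e: "\<alpha> + real n - real (k + n + 1) = (\<alpha> - 1) - real k" by simp
    show ?thesis unfolding e powr_diff powr_realpow[OF L] ..
  qed
  have B: "B_coef n \<alpha> (k + n + 1) = Gamma (1 - \<alpha> + real k) / (Gamma \<alpha> * Gamma (1 - \<alpha>) * ((real k + 1) * fact k))"
    unfolding B_coef_def by (simp add: algebra_simps)
  have g0: "Gamma \<alpha> \<noteq> 0" using al by (auto simp: Gamma_eq_zero_iff dest: nonpos_Ints_Int)
  have k1: "real k + 1 \<noteq> 0" "fact k \<noteq> (0::real)" by simp_all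
  show ?thesis unfolding p B cc using g0 g1 L k1
    by (simp add: divide_simps)
qed



theorem theorem6p4:
  fixes \<alpha> a b t :: real and n :: nat and x :: "real \<Rightarrow> real"
  assumes "\<alpha> > 0" and "\<alpha> \<notin> \<int>"
    and "0 < a" and "a < b"
    and "C_k_on (Suc n) a b x"
    and "t \<in> {a..<b}"
  shows "summable (\<lambda>k. B_coef n \<alpha> (k + n + 1) * (ln (b / t)) powr (\<alpha> + real n - real (k + n + 1))
                         * W_fun n b x (k + n + 1) t)
     \<and> hadamard_right \<alpha> b x t =
        (\<Sum>i\<le>n. A_coef n \<alpha> i * (ln (b / t)) powr (\<alpha> + real i) * xk0 a b x i t)
        + (\<Sum>k. B_coef n \<alpha> (k + n + 1) * (ln (b / t)) powr (\<alpha> + real n - real (k + n + 1))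
                * W_fun n b x (k + n + 1) t)"
proof -
  note al = assms(1,2)
  have t: "a \<le> t" "t < b" "0 < t" using assms(3,6) by auto
  define L where "L = ln (b / t)"
  have L: "L > 0" unfolding L_def using t by simp
  obtain D :: "nat \<Rightarrow> real \<Rightarrow> real" where D: "\<forall>s\<in>{a..b}. D 0 s = x s" "continuous_on {a..b} (D 0)"
    using assms(5) unfolding C_k_on_def by blast
  have xc: "continuous_on {a..b} x" by (rule continuous_on_eq[OF D(2)]) (use D(1) in auto)
  hence xct: "continuous_on {t..b} x" by (rule continuous_on_subset) (use t in auto)
  have "bounded (x ` {a..b})" by (intro compact_imp_bounded compact_continuous_image xc compact_Icc)
  then obtain M where M0: "\<forall>y\<in>x ` {a..b}. norm y \<le> M" unfolding bounded_iff by blast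
  have M: "\<And>s. s \<in> {a..b} \<Longrightarrow> \<bar>x s\<bar> \<le> M" using M0 by auto
  obtain C where C: "C \<ge> 0" "\<And>s N. 0 \<le> s \<Longrightarrow> s < 1 \<Longrightarrow>
     \<bar>\<Sum>k<N. cc \<alpha> k * s ^ k\<bar> \<le> (1 - s) powr (\<alpha> - 1) + C" using cc_bound by blast
  define g where "g k \<tau> = (L powr (\<alpha> - 1) * cc \<alpha> k / L ^ k) * (ln (b / \<tau>) ^ k * x \<tau> / \<tau>)" for k \<tau>
  define F where "F N \<tau> = (\<Sum>k<N. g k \<tau>)" for N \<tau>
  define G where "G \<tau> = ln (\<tau> / t) powr (\<alpha> - 1) * x \<tau> / \<tau>" for \<tau>
  define h where "h \<tau> = M * (ln (\<tau> / t) powr (\<alpha> - 1) / \<tau>) + M * (L powr (\<alpha> - 1) * C) * (1 / \<tau>)" for \<tau>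
  define S where "S = {t<..b}"
  define trm where "trm k = B_coef n \<alpha> (k + n + 1) * L powr (\<alpha> + real n - real (k + n + 1))
                         * W_fun n b x (k + n + 1) t" for k
  have gc: "continuous_on {t..b} (g k)" for k
    unfolding g_def using t by (intro continuous_intros xct) auto
  have gi: "g k integrable_on {t..b}" for k by (rule integrable_continuous_interval[OF gc])
  have trm: "trm k = integral {t..b} (g k) / Gamma \<alpha>" for k
  proof -
    have W: "W_fun n b x (k + n + 1) t = (real k + 1) * integral {t..b} (\<lambda>\<tau>. ln (b / \<tau>) ^ k * x \<tau> / \<tau>)"
    proof -
      have "W_fun n b x (k + n + 1) t = integral {t..b} (\<lambda>\<tau>. (real k + 1) * (ln (b / \<tau>) ^ k * x \<tau> / \<tau>))"
        unfolding W_fun_def by (intro arg_cong[where f="integral {t..b}"] ext) simp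
      then show ?thesis by (simp only: integral_mult_right)
    qed
    have G: "integral {t..b} (g k) = (L powr (\<alpha> - 1) * cc \<alpha> k / L ^ k) * integral {t..b} (\<lambda>\<tau>. ln (b / \<tau>) ^ k * x \<tau> / \<tau>)"
      unfolding g_def by (simp only: integral_mult_right)
    show ?thesis unfolding trm_def W term_eq[OF al(2) L] G ..
  qed
  have psum: "(\<Sum>k<N. trm k) = integral S (F N) / Gamma \<alpha>" for N
  proof -
    have "(\<Sum>k<N. trm k) = (\<Sum>k<N. integral {t..b} (g k)) / Gamma \<alpha>"
      unfolding trm by (simp add: sum_divide_distrib)
    also have "(\<Sum>k<N. integral {t..b} (g k)) = integral {t..b} (F N)"
      unfolding F_def by (rule integral_sum[symmetric]) (auto intro: gi)
    finally show ?thesis unfolding S_def using Icc_Ioc_integral t by simp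
  qed
  have Fi: "F N integrable_on S" for N
    unfolding S_def F_def using t by (subst Icc_Ioc_integrable[symmetric]) (auto intro!: integrable_sum gi)
  have hi: "h integrable_on S"
  proof -
    have "(\<lambda>\<tau>. 1 / \<tau>) integrable_on {t..b}"
      using t by (intro integrable_continuous_interval continuous_intros) auto
    moreover have "(\<lambda>\<tau>. ln (\<tau> / t) powr (\<alpha> - 1) / \<tau>) integrable_on {t..b}"
      using kernel_integrable[of t b \<alpha>] t al by auto
    ultimately have "h integrable_on {t..b}" unfolding h_def
      by (intro integrable_add integrable_on_mult_right)
    thus ?thesis unfolding S_def using Icc_Ioc_integrable[of t b h] t by simp
  qed
  have key: "\<And>\<tau>. \<tau> \<in> S \<Longrightarrow> 0 \<le> ln (b / \<tau>) / L \<and> ln (b / \<tau>) / L < 1 \<and>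
      L powr (\<alpha> - 1) * (1 - ln (b / \<tau>) / L) powr (\<alpha> - 1) = ln (\<tau> / t) powr (\<alpha> - 1)
      \<and> (\<forall>N. F N \<tau> = L powr (\<alpha> - 1) * (\<Sum>k<N. cc \<alpha> k * (ln (b / \<tau>) / L) ^ k) * (x \<tau> / \<tau>))"
  proof -
    fix \<tau> assume \<tau>: "\<tau> \<in> S"
    hence tp: "\<tau> > 0" "t < \<tau>" "\<tau> \<le> b" unfolding S_def using t by auto
    have lb: "ln (b / \<tau>) = ln b - ln \<tau>" "L = ln b - ln t" "ln (\<tau> / t) = ln \<tau> - ln t"
      unfolding L_def using tp t by (simp_all add: ln_div)
    have lt: "ln t < ln \<tau>" "ln \<tau> \<le> ln b" using tp t by auto
    have s: "0 \<le> ln (b / \<tau>) / L" "ln (b / \<tau>) / L < 1"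
      using L lb lt by (auto simp: divide_simps)
    have d: "L - ln (b / \<tau>) = ln (\<tau> / t)" using lb by linarith
    have "L * (1 - ln (b / \<tau>) / L) = L - ln (b / \<tau>)" using L by (simp add: right_diff_distrib)
    hence "L * (1 - ln (b / \<tau>) / L) = ln (\<tau> / t)" using d by simp
    hence e: "L powr (\<alpha> - 1) * (1 - ln (b / \<tau>) / L) powr (\<alpha> - 1) = ln (\<tau> / t) powr (\<alpha> - 1)"
      using L s by (simp add: powr_mult[symmetric])
    have "F N \<tau> = L powr (\<alpha> - 1) * (\<Sum>k<N. cc \<alpha> k * (ln (b / \<tau>) / L) ^ k) * (x \<tau> / \<tau>)" for N
      unfolding F_def g_def by (simp add: sum_distrib_left sum_distrib_right power_divide algebra_simps)
    then show "?thesis \<tau>" using s e by blast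
  qed
  have le: "norm (F N \<tau>) \<le> h \<tau>" if "\<tau> \<in> S" for N \<tau>
  proof -
    note k = key[OF that]
    have tp: "\<tau> > 0" "\<tau> \<in> {a..b}" using that t unfolding S_def by auto
    have xb: "\<bar>x \<tau> / \<tau>\<bar> \<le> M / \<tau>" using M[OF tp(2)] tp by (simp add: divide_right_mono)
    have sb: "\<bar>\<Sum>k<N. cc \<alpha> k * (ln (b / \<tau>) / L) ^ k\<bar> \<le> (1 - ln (b / \<tau>) / L) powr (\<alpha> - 1) + C"
      using C(2) k by blast
    have Lp: "L powr (\<alpha> - 1) \<ge> 0" by simp
    have "norm (F N \<tau>) = L powr (\<alpha> - 1) * \<bar>\<Sum>k<N. cc \<alpha> k * (ln (b / \<tau>) / L) ^ k\<bar> * \<bar>x \<tau> / \<tau>\<bar>"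
      using k by (simp add: abs_mult)
    also have "\<dots> \<le> L powr (\<alpha> - 1) * ((1 - ln (b / \<tau>) / L) powr (\<alpha> - 1) + C) * (M / \<tau>)"
      using sb xb Lp by (intro mult_mono) (auto intro: mult_left_mono)
    also have "\<dots> = h \<tau>" unfolding h_def using k by (simp add: algebra_simps)
    finally show ?thesis .
  qed
  have conv: "(\<lambda>N. F N \<tau>) \<longlonglongrightarrow> G \<tau>" if "\<tau> \<in> S" for \<tau>
  proof -
    note k = key[OF that]
    have "(\<lambda>N. \<Sum>k<N. cc \<alpha> k * (ln (b / \<tau>) / L) ^ k) \<longlonglongrightarrow> (1 - ln (b / \<tau>) / L) powr (\<alpha> - 1)"
      using cc_sums[of "ln (b / \<tau>) / L" \<alpha>] k unfolding sums_def by blast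
    hence "(\<lambda>N. L powr (\<alpha> - 1) * (\<Sum>k<N. cc \<alpha> k * (ln (b / \<tau>) / L) ^ k) * (x \<tau> / \<tau>)) \<longlonglongrightarrow>
        L powr (\<alpha> - 1) * (1 - ln (b / \<tau>) / L) powr (\<alpha> - 1) * (x \<tau> / \<tau>)"
      by (intro tendsto_intros)
    thus ?thesis using k unfolding G_def by simp
  qed
  have lim: "(\<lambda>N. integral S (F N)) \<longlonglongrightarrow> integral S G"
    by (rule dominated_convergence(2)[OF Fi hi le conv])
  have had: "hadamard_right \<alpha> b x t = integral S G / Gamma \<alpha>"
    unfolding hadamard_right_def G_def S_def using Icc_Ioc_integral[of t b] t by simp
  have "(\<lambda>N. \<Sum>k<N. trm k) \<longlonglongrightarrow> integral S G / Gamma \<alpha>"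
    unfolding psum using tendsto_mult_right[OF lim, of "inverse (Gamma \<alpha>)"] by (simp add: divide_inverse)
  hence sm: "trm sums hadamard_right \<alpha> b x t" unfolding sums_def had .
  have A0: "(\<Sum>i\<le>n. A_coef n \<alpha> i * (ln (b / t)) powr (\<alpha> + real i) * xk0 a b x i t) = 0"
    using A_zero[OF al] by simp
  show ?thesis unfolding A0 using sm unfolding trm_def L_def by (simp add: sums_iff)
qed


end
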